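(* Let $n,k$ be integers with $n\geq k+1\geq 2$. Then $E_n(as_k)=\frac{4(n-k)+5}{6}$ holds if and only if $E_n(zs_k)=\frac{2(n-k)+4}{3}$ holds.
   Context: $\mathfrak{S}_n$ is the set of permutations $w=w_1\cdots w_n$ of $\{1,\dots,n\}$. A subsequence $w_{i_1}\cdots w_{i_s}$ ($i_1<\dots<i_s$) is alternating if $w_{i_1}>w_{i_2}<w_{i_3}>\cdots$, reverse alternating if $w_{i_1}<w_{i_2}>w_{i_3}<\cdots$, and zigzagging if it is alternating or reverse alternating. It is $k$-alternating (resp. $k$-zigzagging) if it is alternating (resp. zigzagging) and $|w_{i_j}-w_{i_{j+1}}|\geq k$ for all $j$. $as_k(w)$ (resp. $zs_k(w)$) is the maximal length of a $k$-alternating (resp. $k$-zigzagging) subsequence of $w$. $E_n(as_k)=\frac1{n!}\sum_{w\in\mathfrak{S}_n}as_k(w)$ and $E_n(zs_k)=\frac1{n!}\sum_{w\in\mathfrak{S}_n}zs_k(w)$. *)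

theory Defs
  imports Complex_Main "HOL-Library.Sublist"
begin

definition perms :: "nat \<Rightarrow> nat list set" where
  "perms n = {w. distinct w \<and> set w = {1..n}}"

definition alternating :: "nat list \<Rightarrow> bool" where
  "alternating s \<longleftrightarrow> (\<forall>j. j + 1 < length s \<longrightarrow>
     (if even j then s ! j > s ! (j+1) else s ! j < s ! (j+1)))"

definition rev_alternating :: "nat list \<Rightarrow> bool" where
  "rev_alternating s \<longleftrightarrow> (\<forall>j. j + 1 < length s \<longrightarrow>
     (if even j then s ! j < s ! (j+1) else s ! j > s ! (j+1)))"

definition zigzagging :: "nat list \<Rightarrow> bool" where
  "zigzagging s \<longleftrightarrow> alternating s \<or> rev_alternating s"

definition gaps_ge :: "nat \<Rightarrow> nat list \<Rightarrow> bool" where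
  "gaps_ge k s \<longleftrightarrow> (\<forall>j. j + 1 < length s \<longrightarrow> \<bar>int (s ! j) - int (s ! (j+1))\<bar> \<ge> int k)"

definition k_alternating :: "nat \<Rightarrow> nat list \<Rightarrow> bool" where
  "k_alternating k s \<longleftrightarrow> alternating s \<and> gaps_ge k s"

definition k_zigzagging :: "nat \<Rightarrow> nat list \<Rightarrow> bool" where
  "k_zigzagging k s \<longleftrightarrow> zigzagging s \<and> gaps_ge k s"

definition as_k :: "nat \<Rightarrow> nat list \<Rightarrow> nat" where
  "as_k k w = Max {length s | s. subseq s w \<and> k_alternating k s}"

definition zs_k :: "nat \<Rightarrow> nat list \<Rightarrow> nat" where
  "zs_k k w = Max {length s | s. subseq s w \<and> k_zigzagging k s}"

definition E_as :: "nat \<Rightarrow> nat \<Rightarrow> real" where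
  "E_as n k = (\<Sum>w\<in>perms n. real (as_k k w)) / fact n"

definition E_zs :: "nat \<Rightarrow> nat \<Rightarrow> real" where
  "E_zs n k = (\<Sum>w\<in>perms n. real (zs_k k w)) / fact n"

end

theory Submission imports Defs "HOL-Combinatorics.Multiset_Permutations" begin

lemma alt_Cons: "alternating (a # xs) \<longleftrightarrow> (xs \<noteq> [] \<longrightarrow> hd xs < a) \<and> rev_alternating xs"
proof
  assume h: "alternating (a # xs)"
  show "(xs \<noteq> [] \<longrightarrow> hd xs < a) \<and> rev_alternating xs"
  proof
    show "xs \<noteq> [] \<longrightarrow> hd xs < a" using h[unfolded alternating_def, rule_format, of 0]
      by (cases xs) auto
    show "rev_alternating xs" unfolding rev_alternating_def
    proof (intro allI impI)
      fix j assume "j + 1 < length xs"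
      with h[unfolded alternating_def, rule_format, of "Suc j"]
      show "if even j then xs ! j < xs ! (j + 1) else xs ! (j + 1) < xs ! j" by auto
    qed
  qed
next
  assume h: "(xs \<noteq> [] \<longrightarrow> hd xs < a) \<and> rev_alternating xs"
  show "alternating (a # xs)" unfolding alternating_def
  proof (intro allI impI)
    fix j assume j: "j + 1 < length (a # xs)"
    show "if even j then (a # xs) ! (j + 1) < (a # xs) ! j else (a # xs) ! j < (a # xs) ! (j + 1)"
    proof (cases j)
      case 0 then show ?thesis using h j by (cases xs) auto
    next
      case (Suc i) then show ?thesis using h[THEN conjunct2, unfolded rev_alternating_def, rule_format, of i] j by auto
    qed
  qed
qed

lemma ralt_Cons: "rev_alternating (a # xs) \<longleftrightarrow> (xs \<noteq> [] \<longrightarrow> a < hd xs) \<and> alternating xs"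
proof
  assume h: "rev_alternating (a # xs)"
  show "(xs \<noteq> [] \<longrightarrow> a < hd xs) \<and> alternating xs"
  proof
    show "xs \<noteq> [] \<longrightarrow> a < hd xs" using h[unfolded rev_alternating_def, rule_format, of 0]
      by (cases xs) auto
    show "alternating xs" unfolding alternating_def
    proof (intro allI impI)
      fix j assume "j + 1 < length xs"
      with h[unfolded rev_alternating_def, rule_format, of "Suc j"]
      show "if even j then xs ! (j + 1) < xs ! j else xs ! j < xs ! (j + 1)" by auto
    qed
  qed
next
  assume h: "(xs \<noteq> [] \<longrightarrow> a < hd xs) \<and> alternating xs"
  show "rev_alternating (a # xs)" unfolding rev_alternating_def
  proof (intro allI impI)
    fix j assume j: "j + 1 < length (a # xs)"
    show "if even j then (a # xs) ! j < (a # xs) ! (j + 1) else (a # xs) ! (j + 1) < (a # xs) ! j"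
    proof (cases j)
      case 0 then show ?thesis using h j by (cases xs) auto
    next
      case (Suc i) then show ?thesis using h[THEN conjunct2, unfolded alternating_def, rule_format, of i] j by auto
    qed
  qed
qed

lemma gaps_Cons: "gaps_ge k (a # xs) \<longleftrightarrow> (xs \<noteq> [] \<longrightarrow> \<bar>int a - int (hd xs)\<bar> \<ge> int k) \<and> gaps_ge k xs"
proof
  assume h: "gaps_ge k (a # xs)"
  show "(xs \<noteq> [] \<longrightarrow> \<bar>int a - int (hd xs)\<bar> \<ge> int k) \<and> gaps_ge k xs"
  proof
    show "xs \<noteq> [] \<longrightarrow> \<bar>int a - int (hd xs)\<bar> \<ge> int k" using h[unfolded gaps_ge_def, rule_format, of 0]
      by (cases xs) auto
    show "gaps_ge k xs" unfolding gaps_ge_def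
    proof (intro allI impI)
      fix j assume "j + 1 < length xs"
      with h[unfolded gaps_ge_def, rule_format, of "Suc j"]
      show "int k \<le> \<bar>int (xs ! j) - int (xs ! (j + 1))\<bar>" by auto
    qed
  qed
next
  assume h: "(xs \<noteq> [] \<longrightarrow> \<bar>int a - int (hd xs)\<bar> \<ge> int k) \<and> gaps_ge k xs"
  show "gaps_ge k (a # xs)" unfolding gaps_ge_def
  proof (intro allI impI)
    fix j assume j: "j + 1 < length (a # xs)"
    show "int k \<le> \<bar>int ((a # xs) ! j) - int ((a # xs) ! (j + 1))\<bar>"
    proof (cases j)
      case 0 then show ?thesis using h j by (cases xs) auto
    next
      case (Suc i) then show ?thesis using h[THEN conjunct2, unfolded gaps_ge_def, rule_format, of i] j by auto
    qed
  qed
qed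

lemma alt_Nil[simp]: "alternating []" and ralt_Nil[simp]: "rev_alternating []" and gaps_Nil[simp]: "gaps_ge k []"
  by (auto simp: alternating_def rev_alternating_def gaps_ge_def)

definition noGap :: "nat \<Rightarrow> nat list \<Rightarrow> bool" where
  "noGap k P \<longleftrightarrow> (\<forall>x\<in>set P. \<forall>y\<in>set P. \<bar>int x - int y\<bar> < int k)"

lemma subseq_setD: "subseq xs ys \<Longrightarrow> x \<in> set xs \<Longrightarrow> x \<in> set ys"
  by (erule list_emb_set) auto

lemma sub_helper: "subseq t z \<Longrightarrow> subseq (a # b # t) ((u @ a # v) @ b # z)"
proof -
  assume "subseq t z"
  then have "subseq (b # t) (b # z)" by (rule subseq_Cons2)
  then have "subseq (b # t) (v @ b # z)" by (rule subseq_drop_many)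
  then have "subseq (a # b # t) (a # v @ b # z)" by (rule subseq_Cons2)
  then have "subseq (a # b # t) (u @ a # v @ b # z)" by (rule subseq_drop_many)
  then show ?thesis by simp
qed

lemma sub_helper2: "subseq t z \<Longrightarrow> subseq (a # t) ((u @ a # v) @ b # z)"
proof -
  assume "subseq t z"
  then have "subseq t ((v @ [b]) @ z)" by (rule subseq_drop_many)
  then have "subseq (a # t) (a # v @ b # z)" using subseq_Cons2 by fastforce
  then have "subseq (a # t) (u @ a # v @ b # z)" by (rule subseq_drop_many)
  then show ?thesis by simp
qed

lemma up_extend:
  assumes w: "w = (u @ a # v) @ b # z" and ab: "a + k \<le> b" and ng: "noGap k (u @ a # v)"
    and ss: "subseq s w" and al: "alternating s" and g: "gaps_ge k s" and k1: "1 \<le> k"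
  shows "\<exists>t. subseq t w \<and> rev_alternating t \<and> gaps_ge k t \<and> length t = length s + 1"
proof -
  let ?P = "u @ a # v"
  have aP: "a \<in> set ?P" by simp
  have sub_ab: "subseq [a, b] w" unfolding w
    using sub_helper[of "[]" z a b u v] by simp
  show ?thesis
  proof (cases s)
    case Nil then show ?thesis using w by (intro exI[of _ "[a]"]) (auto simp: ralt_Cons alt_Cons gaps_Cons)
  next
    case (Cons s1 s')
    show ?thesis
    proof (cases s')
      case Nil then show ?thesis using Cons ab sub_ab k1
        by (intro exI[of _ "[a,b]"]) (auto simp: ralt_Cons alt_Cons gaps_Cons)
    next
      case (Cons s2 rest)
      note s = \<open>s = s1 # s'\<close>[unfolded Cons]
      have lt: "s2 < s1" and ra: "rev_alternating (s2 # rest)" using al unfolding s by (simp_all add: alt_Cons)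
      have ga: "int k \<le> \<bar>int s1 - int s2\<bar>" and g2: "gaps_ge k (s2 # rest)"
        using g unfolding s by (simp_all add: gaps_Cons)
      have "\<bar>int s1 - int s2\<bar> = int s1 - int s2" using lt by simp
      then have s21: "s2 + k \<le> s1" using ga by linarith
      have key: "\<exists>x. subseq (a # x # s2 # rest) w \<and> a + k \<le> x \<and> s2 + k \<le> x"
      proof -
        have "subseq (s1 # s2 # rest) ((u @ a # v) @ b # z)" using ss unfolding w s .
        then obtain xs1 xs2 where sp: "s1 # s2 # rest = xs1 @ xs2"
          and sub1: "subseq xs1 ?P" and sub2: "subseq xs2 (b # z)" by (rule subseq_appendE)
        show ?thesis
        proof (cases xs1)
          case Nil
          then have sub2': "subseq (s1 # s2 # rest) (b # z)" using sp sub2 by simp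
          show ?thesis
          proof (cases "s1 = b")
            case True
            then have "subseq (s2 # rest) z" using sub2'
              using subseq_Cons2' by auto
            then have "subseq (a # b # s2 # rest) w" unfolding w
              by (rule sub_helper)
            then show ?thesis using True s21 ab by (intro exI[of _ b]) auto
          next
            case False
            then have sz: "subseq (s1 # s2 # rest) z" using subseq_Cons2_neq[OF sub2'] by blast
            show ?thesis
            proof (cases "a + k \<le> s1")
              case True
              have "subseq (a # s1 # s2 # rest) w" unfolding w using sz
                by (rule sub_helper2)
              then show ?thesis using True s21 by (intro exI[of _ s1]) auto
            next
              case False
              have "subseq (s2 # rest) z" using sz by (meson subseq_Cons')
              then have "subseq (a # b # s2 # rest) w" unfolding w
                by (rule sub_helper)
              then show ?thesis using False s21 ab by (intro exI[of _ b]) auto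
            qed
          qed
        next
          case (Cons y ys)
          with sp have y: "y = s1" and sp2: "s2 # rest = ys @ xs2" by auto
          have s1P: "s1 \<in> set ?P" using sub1 Cons y by (metis list.set_intros(1) subseq_setD)
          have ys: "ys = []"
          proof (rule ccontr)
            assume "ys \<noteq> []"
            then have "hd ys = s2" using sp2 by (cases ys) auto
            then have "s2 \<in> set ?P" using sub1 Cons \<open>ys \<noteq> []\<close>
              by (metis hd_in_set list.set_intros(2) subseq_setD)
            then have "\<bar>int s1 - int s2\<bar> < int k" using ng s1P unfolding noGap_def by blast
            then show False using s21 by linarith
          qed
          then have sub2': "subseq (s2 # rest) (b # z)" using sp2 sub2 by simp
          have s1a: "\<bar>int s1 - int a\<bar> < int k" using ng s1P aP unfolding noGap_def by blast
          have "s2 \<noteq> b" using s1a s21 ab by linarith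
          then have "subseq (s2 # rest) z" using sub2' by simp
          then have "subseq (a # b # s2 # rest) w" unfolding w
            by (rule sub_helper)
          then show ?thesis using s1a s21 ab by (intro exI[of _ b]) auto
        qed
      qed
      then obtain x where x: "subseq (a # x # s2 # rest) w" "a + k \<le> x" "s2 + k \<le> x" by blast
      show ?thesis
        by (rule exI[of _ "a # x # s2 # rest"]) (use x ra g2 s k1 in \<open>auto simp: ralt_Cons alt_Cons gaps_Cons\<close>)
    qed
  qed
qed


lemma down_extend:
  assumes w: "w = (u @ a # v) @ b # z" and ab: "b + k \<le> a" and ng: "noGap k (u @ a # v)"
    and ss: "subseq s w" and al: "rev_alternating s" and g: "gaps_ge k s" and k1: "1 \<le> k"
  shows "\<exists>t. subseq t w \<and> alternating t \<and> gaps_ge k t \<and> length t = length s + 1"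
proof -
  let ?P = "u @ a # v"
  have aP: "a \<in> set ?P" by simp
  have sub_ab: "subseq [a, b] w" unfolding w
    using sub_helper[of "[]" z a b u v] by simp
  show ?thesis
  proof (cases s)
    case Nil then show ?thesis using w by (intro exI[of _ "[a]"]) (auto simp: ralt_Cons alt_Cons gaps_Cons)
  next
    case (Cons s1 s')
    show ?thesis
    proof (cases s')
      case Nil then show ?thesis using Cons ab sub_ab k1
        by (intro exI[of _ "[a,b]"]) (auto simp: ralt_Cons alt_Cons gaps_Cons)
    next
      case (Cons s2 rest)
      note s = \<open>s = s1 # s'\<close>[unfolded Cons]
      have lt: "s1 < s2" and ra: "alternating (s2 # rest)" using al unfolding s by (simp_all add: ralt_Cons)
      have ga: "int k \<le> \<bar>int s1 - int s2\<bar>" and g2: "gaps_ge k (s2 # rest)"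
        using g unfolding s by (simp_all add: gaps_Cons)
      have "\<bar>int s1 - int s2\<bar> = int s2 - int s1" using lt by simp
      then have s21: "s1 + k \<le> s2" using ga by linarith
      have key: "\<exists>x. subseq (a # x # s2 # rest) w \<and> x + k \<le> a \<and> x + k \<le> s2"
      proof -
        have "subseq (s1 # s2 # rest) ((u @ a # v) @ b # z)" using ss unfolding w s .
        then obtain xs1 xs2 where sp: "s1 # s2 # rest = xs1 @ xs2"
          and sub1: "subseq xs1 ?P" and sub2: "subseq xs2 (b # z)" by (rule subseq_appendE)
        show ?thesis
        proof (cases xs1)
          case Nil
          then have sub2': "subseq (s1 # s2 # rest) (b # z)" using sp sub2 by simp
          show ?thesis
          proof (cases "s1 = b")
            case True
            then have "subseq (s2 # rest) z" using sub2'
              using subseq_Cons2' by auto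
            then have "subseq (a # b # s2 # rest) w" unfolding w
              by (rule sub_helper)
            then show ?thesis using True s21 ab by (intro exI[of _ b]) auto
          next
            case False
            then have sz: "subseq (s1 # s2 # rest) z" using subseq_Cons2_neq[OF sub2'] by blast
            show ?thesis
            proof (cases "s1 + k \<le> a")
              case True
              have "subseq (a # s1 # s2 # rest) w" unfolding w using sz
                by (rule sub_helper2)
              then show ?thesis using True s21 by (intro exI[of _ s1]) auto
            next
              case False
              have "subseq (s2 # rest) z" using sz by (meson subseq_Cons')
              then have "subseq (a # b # s2 # rest) w" unfolding w
                by (rule sub_helper)
              then show ?thesis using False s21 ab by (intro exI[of _ b]) auto
            qed
          qed
        next
          case (Cons y ys)
          with sp have y: "y = s1" and sp2: "s2 # rest = ys @ xs2" by auto
          have s1P: "s1 \<in> set ?P" using sub1 Cons y by (metis list.set_intros(1) subseq_setD)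
          have ys: "ys = []"
          proof (rule ccontr)
            assume "ys \<noteq> []"
            then have "hd ys = s2" using sp2 by (cases ys) auto
            then have "s2 \<in> set ?P" using sub1 Cons \<open>ys \<noteq> []\<close>
              by (metis hd_in_set list.set_intros(2) subseq_setD)
            then have "\<bar>int s1 - int s2\<bar> < int k" using ng s1P unfolding noGap_def by blast
            then show False using s21 by linarith
          qed
          then have sub2': "subseq (s2 # rest) (b # z)" using sp2 sub2 by simp
          have s1a: "\<bar>int s1 - int a\<bar> < int k" using ng s1P aP unfolding noGap_def by blast
          have "s2 \<noteq> b" using s1a s21 ab by linarith
          then have "subseq (s2 # rest) z" using sub2' by simp
          then have "subseq (a # b # s2 # rest) w" unfolding w
            by (rule sub_helper)
          then show ?thesis using s1a s21 ab by (intro exI[of _ b]) auto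
        qed
      qed
      then obtain x where x: "subseq (a # x # s2 # rest) w" "x + k \<le> a" "x + k \<le> s2" by blast
      show ?thesis
        by (rule exI[of _ "a # x # s2 # rest"]) (use x ra g2 s k1 in \<open>auto simp: ralt_Cons alt_Cons gaps_Cons\<close>)
    qed
  qed
qed

definition SA :: "nat \<Rightarrow> nat list \<Rightarrow> nat set" where
  "SA k w = {length s | s. subseq s w \<and> k_alternating k s}"
definition SR :: "nat \<Rightarrow> nat list \<Rightarrow> nat set" where
  "SR k w = {length s | s. subseq s w \<and> rev_alternating s \<and> gaps_ge k s}"

lemma fin_SA: "finite (SA k w)"
  by (rule finite_subset[of _ "{..length w}"]) (auto simp: SA_def dest: list_emb_length)
lemma fin_SR: "finite (SR k w)"
  by (rule finite_subset[of _ "{..length w}"]) (auto simp: SR_def dest: list_emb_length)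
lemma ne_SA: "SA k w \<noteq> {}"
  unfolding SA_def k_alternating_def by (rule ccontr) (auto dest: spec[of _ "[]"])
lemma ne_SR: "SR k w \<noteq> {}"
  unfolding SR_def by (rule ccontr) (auto dest: spec[of _ "[]"])

lemma as_eq: "as_k k w = Max (SA k w)" unfolding as_k_def SA_def ..
lemma zs_eq: "zs_k k w = max (Max (SA k w)) (Max (SR k w))"
proof -
  have "{length s | s. subseq s w \<and> k_zigzagging k s} = SA k w \<union> SR k w"
    unfolding SA_def SR_def k_zigzagging_def k_alternating_def zigzagging_def by blast
  then show ?thesis unfolding zs_k_def using Max_Un[OF fin_SA ne_SA fin_SR ne_SR] by simp
qed

lemma subseq_tl: "subseq (tl s) s"
  by (cases s) (auto intro: subseq_drop_many[of _ _ "[_]", simplified] subseq_order.order_refl)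

lemma SR_le: "Max (SR k w) \<le> Max (SA k w) + 1"
proof -
  have "x \<le> Max (SA k w) + 1" if "x \<in> SR k w" for x
  proof -
    from that obtain s where s: "x = length s" "subseq s w" "rev_alternating s" "gaps_ge k s"
      unfolding SR_def by blast
    have "alternating (tl s)" "gaps_ge k (tl s)" using s by (cases s; auto simp: ralt_Cons gaps_Cons)+
    moreover have "subseq (tl s) w" using s subseq_tl subseq_order.trans by blast
    ultimately have "length (tl s) \<in> SA k w" unfolding SA_def k_alternating_def by blast
    then have "length (tl s) \<le> Max (SA k w)" using fin_SA by auto
    then show ?thesis using s by simp
  qed
  then show ?thesis using fin_SR ne_SR by auto
qed

lemma SA_le: "Max (SA k w) \<le> Max (SR k w) + 1"
proof -
  have "x \<le> Max (SR k w) + 1" if "x \<in> SA k w" for x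
  proof -
    from that obtain s where s: "x = length s" "subseq s w" "alternating s" "gaps_ge k s"
      unfolding SA_def k_alternating_def by blast
    have "rev_alternating (tl s)" "gaps_ge k (tl s)" using s by (cases s; auto simp: alt_Cons gaps_Cons)+
    moreover have "subseq (tl s) w" using s subseq_tl subseq_order.trans by blast
    ultimately have "length (tl s) \<in> SR k w" unfolding SR_def by blast
    then have "length (tl s) \<le> Max (SR k w)" using fin_SR by auto
    then show ?thesis using s by simp
  qed
  then show ?thesis using fin_SA ne_SA by auto
qed

definition upw :: "nat \<Rightarrow> nat list \<Rightarrow> bool" where
  "upw k w \<longleftrightarrow> (\<exists>u a v b z. w = (u @ a # v) @ b # z \<and> a + k \<le> b \<and> noGap k (u @ a # v))"
definition downw :: "nat \<Rightarrow> nat list \<Rightarrow> bool" where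
  "downw k w \<longleftrightarrow> (\<exists>u a v b z. w = (u @ a # v) @ b # z \<and> b + k \<le> a \<and> noGap k (u @ a # v))"

lemma up_zs: assumes "upw k w" "1 \<le> k" shows "zs_k k w = as_k k w + 1"
proof -
  obtain u a v b z where h: "w = (u @ a # v) @ b # z" "a + k \<le> b" "noGap k (u @ a # v)"
    using assms(1) unfolding upw_def by blast
  have "Max (SA k w) \<in> SA k w" using fin_SA ne_SA by (rule Max_in)
  then obtain s where s: "Max (SA k w) = length s" "subseq s w" "alternating s" "gaps_ge k s"
    unfolding SA_def k_alternating_def by blast
  obtain t where t: "subseq t w" "rev_alternating t" "gaps_ge k t" "length t = length s + 1"
    using up_extend[OF h s(2,3,4) assms(2)] by blast
  have "length s + 1 \<in> SR k w" unfolding SR_def using t by (intro CollectI exI[of _ t]) simp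
  then have "length s + 1 \<le> Max (SR k w)" using fin_SR by auto
  then show ?thesis unfolding zs_eq as_eq using SR_le[of k w] s(1) by simp
qed

lemma down_zs: assumes "downw k w" "1 \<le> k" shows "zs_k k w = as_k k w"
proof -
  obtain u a v b z where h: "w = (u @ a # v) @ b # z" "b + k \<le> a" "noGap k (u @ a # v)"
    using assms(1) unfolding downw_def by blast
  have "Max (SR k w) \<in> SR k w" using fin_SR ne_SR by (rule Max_in)
  then obtain s where s: "Max (SR k w) = length s" "subseq s w" "rev_alternating s" "gaps_ge k s"
    unfolding SR_def by blast
  obtain t where t: "subseq t w" "alternating t" "gaps_ge k t" "length t = length s + 1"
    using down_extend[OF h s(2,3,4) assms(2)] by blast
  have "length s + 1 \<in> SA k w" unfolding SA_def k_alternating_def using t by (intro CollectI exI[of _ t]) simp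
  then have "length s + 1 \<le> Max (SA k w)" using fin_SA by auto
  then show ?thesis unfolding zs_eq as_eq using s(1) by simp
qed

lemma trich: assumes k1: "1 \<le> k" shows "noGap k w \<or> upw k w \<or> downw k w"
proof (induction w rule: rev_induct)
  case Nil then show ?case by (simp add: noGap_def)
next
  case (snoc b w')
  show ?case
  proof (cases "noGap k w'")
    case ng: True
    show ?thesis
    proof (cases "\<forall>a\<in>set w'. \<bar>int a - int b\<bar> < int k")
      case True
      have k0: "k > 0" using k1 by linarith
      then have "noGap k (w' @ [b])" using True ng unfolding noGap_def
        by (auto simp: abs_minus_commute)
      then show ?thesis by simp
    next
      case False
      then obtain a where aw: "a \<in> set w'" and g: "\<bar>int a - int b\<bar> \<ge> int k" by auto
      obtain u v where uv: "w' = u @ a # v" using split_list[OF aw] by blast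
      have e: "w' @ [b] = (u @ a # v) @ b # []" using uv by simp
      have "a + k \<le> b \<or> b + k \<le> a" using g by linarith
      then show ?thesis using e ng uv unfolding upw_def downw_def by blast
    qed
  next
    case False
    with snoc.IH have "upw k w' \<or> downw k w'" by simp
    then show ?thesis unfolding upw_def downw_def by fastforce
  qed
qed

lemma excl: assumes "upw k w" "downw k w" shows False
proof -
  obtain u a v b z where h: "w = (u @ a # v) @ b # z" "a + k \<le> b" "noGap k (u @ a # v)"
    using assms(1) unfolding upw_def by blast
  obtain u' a' v' b' z' where h': "w = (u' @ a' # v') @ b' # z'" "b' + k \<le> a'" "noGap k (u' @ a' # v')"
    using assms(2) unfolding downw_def by blast
  define P where "P = u @ a # v"
  define P' where "P' = u' @ a' # v'"
  have w1: "w = P @ b # z" using h(1) unfolding P_def by simp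
  have w2: "w = P' @ b' # z'" using h'(1) unfolding P'_def by simp
  have P: "P = take (length P) w" "b = w ! length P" using w1 by (simp_all add: nth_append)
  have P': "P' = take (length P') w" "b' = w ! length P'" using w2 by (simp_all add: nth_append)
  have lw1: "length P < length w" using w1 by simp
  have lw2: "length P' < length w" using w2 by simp
  note lw = lw1 lw2
  have tk: "take (Suc i) w = take i w @ [w ! i]" if "i < length w" for i
    using that by (simp add: take_Suc_conv_app_nth)
  consider "length P < length P'" | "length P' < length P" | "length P = length P'" by linarith
  then show False
  proof cases
    case 1
    have e: "P @ [b] = take (Suc (length P)) w" using w1 by simp
    have "set (take (Suc (length P)) w) \<subseteq> set (take (length P') w)"
      using 1 by (simp add: set_take_subset_set_take)
    then have "set (P @ [b]) \<subseteq> set P'" using e P'(1) by metis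
    then have "a \<in> set P'" "b \<in> set P'" unfolding P_def by auto
    then show False using h'(3) h(2) unfolding P'_def noGap_def by fastforce
  next
    case 2
    have e: "P' @ [b'] = take (Suc (length P')) w" using w2 by simp
    have "set (take (Suc (length P')) w) \<subseteq> set (take (length P) w)"
      using 2 by (simp add: set_take_subset_set_take)
    then have "set (P' @ [b']) \<subseteq> set P" using e P(1) by metis
    then have "a' \<in> set P" "b' \<in> set P" unfolding P'_def by auto
    then show False using h(3) h'(2) unfolding P_def noGap_def by fastforce
  next
    case 3
    then have "P = P'" "b = b'" using P P' by simp_all
    moreover have "a \<in> set P" "a' \<in> set P'" unfolding P_def P'_def by simp_all
    ultimately have "a \<in> set P" "a' \<in> set P" by simp_all
    then show False using h(3) h(2) h'(2) \<open>b = b'\<close> unfolding P_def noGap_def by fastforce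
  qed
qed

definition cw :: "nat \<Rightarrow> nat list \<Rightarrow> nat list" where
  "cw n w = map (\<lambda>x. n + 1 - x) w"

lemma noGap_cw: assumes "set P \<subseteq> {..n}" "noGap k P" shows "noGap k (cw n P)"
  unfolding noGap_def cw_def
proof (intro ballI)
  fix x y assume "x \<in> set (map (\<lambda>x. n + 1 - x) P)" "y \<in> set (map (\<lambda>x. n + 1 - x) P)"
  then obtain x' y' where xy: "x' \<in> set P" "y' \<in> set P" "x = n + 1 - x'" "y = n + 1 - y'" by auto
  have le: "x' \<le> n" "y' \<le> n" using xy(1,2) assms(1) by auto
  have "int x - int y = int y' - int x'" using xy(3,4) le by linarith
  moreover have "\<bar>int y' - int x'\<bar> < int k" using assms(2) xy(1,2) unfolding noGap_def by blast
  ultimately show "\<bar>int x - int y\<bar> < int k" by simp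
qed

lemma up_cw: assumes "set w \<subseteq> {..n}" "upw k w" shows "downw k (cw n w)"
proof -
  obtain u a v b z where h: "w = (u @ a # v) @ b # z" "a + k \<le> b" "noGap k (u @ a # v)"
    using assms(2) unfolding upw_def by blast
  have "cw n w = (cw n u @ (n + 1 - a) # cw n v) @ (n + 1 - b) # cw n z" using h(1) by (simp add: cw_def)
  moreover have "(n + 1 - b) + k \<le> n + 1 - a" using h(1,2) assms(1) by auto
  moreover have "noGap k (cw n u @ (n + 1 - a) # cw n v)" using noGap_cw[of "u @ a # v" n k] h assms(1) by (auto simp: cw_def)
  ultimately show ?thesis unfolding downw_def
    by (intro exI[of _ "cw n u"] exI[of _ "n+1-a"] exI[of _ "cw n v"] exI[of _ "n+1-b"] exI[of _ "cw n z"]) simp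
qed

lemma down_cw: assumes "set w \<subseteq> {..n}" "downw k w" shows "upw k (cw n w)"
proof -
  obtain u a v b z where h: "w = (u @ a # v) @ b # z" "b + k \<le> a" "noGap k (u @ a # v)"
    using assms(2) unfolding downw_def by blast
  have "cw n w = (cw n u @ (n + 1 - a) # cw n v) @ (n + 1 - b) # cw n z" using h(1) by (simp add: cw_def)
  moreover have "(n + 1 - a) + k \<le> n + 1 - b" using h(1,2) assms(1) by auto
  moreover have "noGap k (cw n u @ (n + 1 - a) # cw n v)" using noGap_cw[of "u @ a # v" n k] h assms(1) by (auto simp: cw_def)
  ultimately show ?thesis unfolding upw_def
    by (intro exI[of _ "cw n u"] exI[of _ "n+1-a"] exI[of _ "cw n v"] exI[of _ "n+1-b"] exI[of _ "cw n z"]) simp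
qed

lemma cw_perms: assumes "w \<in> perms n" shows "cw n w \<in> perms n" "cw n (cw n w) = w"
proof -
  have s: "set w = {1..n}" "distinct w" using assms by (auto simp: perms_def)
  have "inj_on (\<lambda>x. n + 1 - x) {1..n}" by (auto simp: inj_on_def)
  moreover have "(\<lambda>x. n + 1 - x) ` {1..n} = {1..n}"
  proof
    show "(\<lambda>x. n + 1 - x) ` {1..n} \<subseteq> {1..n}" by auto
    show "{1..n} \<subseteq> (\<lambda>x. n + 1 - x) ` {1..n}"
    proof
      fix y assume "y \<in> {1..n}"
      then show "y \<in> (\<lambda>x. n + 1 - x) ` {1..n}" by (intro image_eqI[of _ _ "n + 1 - y"]) auto
    qed
  qed
  ultimately show "cw n w \<in> perms n" using s unfolding cw_def perms_def by (auto simp: distinct_map)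
  show "cw n (cw n w) = w" unfolding cw_def using s(1)
    by (auto intro!: map_idI)
qed

lemma perms_perm: "perms n = permutations_of_set {1..n}"
  unfolding perms_def permutations_of_set_def by auto

lemma card_perms: "card (perms n) = fact n"
  unfolding perms_perm by simp

lemma fin_perms: "finite (perms n)"
  using card_perms[of n] by (metis card_ge_0_finite fact_gt_zero)

lemma perm_gap: assumes "w \<in> perms n" "1 \<le> k" "k + 1 \<le> n" shows "\<not> noGap k w"
proof
  assume ng: "noGap k w"
  have "1 \<in> set w" "n \<in> set w" using assms by (auto simp: perms_def)
  then have "\<bar>int n - int 1\<bar> < int k" using ng unfolding noGap_def by blast
  then show False using assms(3) by linarith
qed

lemma half: assumes k1: "1 \<le> k" and kn: "k + 1 \<le> n"
  shows "E_zs n k = E_as n k + 1 / 2"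
proof -
  define U where "U = {w \<in> perms n. upw k w}"
  define D where "D = {w \<in> perms n. downw k w}"
  have upd: "upw k w \<or> downw k w" if "w \<in> perms n" for w
    using trich[OF k1, of w] perm_gap[OF that k1 kn] by blast
  have zs: "real (zs_k k w) = real (as_k k w) + (if upw k w then 1 else 0)" if "w \<in> perms n" for w
  proof (cases "upw k w")
    case True then show ?thesis using up_zs[OF True k1] by simp
  next
    case False then show ?thesis using down_zs[OF _ k1, of w] upd[OF that] by simp
  qed
  have "(\<Sum>w\<in>perms n. real (zs_k k w)) = (\<Sum>w\<in>perms n. real (as_k k w)) + (\<Sum>w\<in>perms n. (if upw k w then 1 else 0))"
    using zs by (simp add: sum.distrib)
  also have "(\<Sum>w\<in>perms n. (if upw k w then 1 else 0 :: real)) = real (card U)"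
    unfolding U_def using fin_perms by (simp add: sum.If_cases Int_def)
  finally have S: "(\<Sum>w\<in>perms n. real (zs_k k w)) = (\<Sum>w\<in>perms n. real (as_k k w)) + real (card U)" .
  have "bij_betw (cw n) U D"
  proof (rule bij_betw_byWitness[where f'="cw n"])
    show "\<forall>a\<in>U. cw n (cw n a) = a" "\<forall>a\<in>D. cw n (cw n a) = a"
      unfolding U_def D_def using cw_perms by auto
    have sub: "set w \<subseteq> {..n}" if "w \<in> perms n" for w using that by (auto simp: perms_def)
    show "cw n ` U \<subseteq> D" unfolding U_def D_def using cw_perms up_cw sub by auto
    show "cw n ` D \<subseteq> U" unfolding U_def D_def using cw_perms down_cw sub by auto
  qed
  then have cUD: "card U = card D" by (rule bij_betw_same_card)
  have "U \<union> D = perms n" unfolding U_def D_def using upd by auto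
  moreover have "U \<inter> D = {}" unfolding U_def D_def using excl by auto
  moreover have "finite U" "finite D" unfolding U_def D_def using fin_perms by auto
  ultimately have "card U + card D = fact n" using card_Un_disjoint card_perms by metis
  then have cU: "2 * real (card U) = fact n" using cUD
    by (metis mult_2 of_nat_add of_nat_fact)
  have fpos: "(fact n :: real) > 0" by simp
  show ?thesis unfolding E_zs_def E_as_def S using cU fpos
    by (simp add: field_simps)
qed

theorem lemma1p2:
  fixes n k :: nat
  assumes "1 \<le> k" and "k + 1 \<le> n"
  shows "E_as n k = (4 * (real n - real k) + 5) / 6 \<longleftrightarrow>
         E_zs n k = (2 * (real n - real k) + 4) / 3"
  using half[OF assms] by (auto simp: field_simps)

end
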